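(* Let $G$ be an edge-coloured digraph. Then, in the Hopf algebra $\mathrm{QSym}(x)$, $$\Delta(\mathscr{X}_G(x))=\sum_{F}\mathscr{X}_{G|_{V(G)-V(F)}}(x)\otimes\mathscr{X}_F(x),$$ where the sum runs over all $\{\rightarrow,\Rightarrow\}$-induced subdigraphs $F$ of $G$.
   Context: An edge-coloured digraph is a finite simple digraph $G$ (no loops; for distinct vertices $a,b$ at most one edge from $a$ to $b$) in which every edge is assigned one of three types: dashed ($a\dashrightarrow b$), solid ($a\rightarrow b$) or double ($a\Rightarrow b$). A proper vertex-colouring is $\kappa:V(G)\to\mathbb{P}$ with $\kappa(a)\ne\kappa(b)$ for dashed edges $(a,b)$, $\kappa(a)<\kappa(b)$ for solid edges, $\kappa(a)\le\kappa(b)$ for double edges. The generalized chromatic function is $\mathscr{X}_G(x)=\sum_{\kappa}\prod_{a\in V(G)}x_{\kappa(a)}$, summed over proper vertex-colourings, in commuting variables $x_1,x_2,\dots$ (for the empty digraph it equals $1$). For $A\subseteq V(G)$, $G|_A$ is the induced subdigraph on $A$ (all edges of $G$ with both ends in $A$, with their types). An induced subdigraph $F$ of $G$ (possibly empty or all of $G$) is $\{\rightarrow,\Rightarrow\}$-induced if whenever $a\in V(F)$ and $a\rightarrow b$ or $a\Rightarrow b$ is an edge of $G$, then $b\in V(F)$. $\mathrm{QSym}(x)$ is the algebra of bounded-degree formal power series $f$ such that for every composition $(\alpha_1,\dots,\alpha_k)$ all monomials $x_{i_1}^{\alpha_1}\cdots x_{i_k}^{\alpha_k}$ with $i_1<\dots<i_k$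 have the same coefficient; its coproduct $\Delta$ is obtained by substituting the ordered alphabet $x_1<x_2<\cdots<y_1<y_2<\cdots$ into $f$, writing the result as an element $\sum f_1(x)g_1(y)$ of $\mathrm{QSym}(x)\otimes\mathrm{QSym}(y)$, and identifying $y$ with $x$ to get $\sum f_1\otimes g_1$. *)

theory Defs
  imports Main
begin

datatype etype = Dashed | Solid | Double

text \<open>An edge-coloured digraph is a pair (V, E): a finite vertex set V and
  a partial map E a b giving the type of the (unique, if any) edge from a to b.\<close>
definition ec_digraph :: "'a set \<Rightarrow> ('a \<Rightarrow> 'a \<Rightarrow> etype option) \<Rightarrow> bool" where
  "ec_digraph V E \<longleftrightarrow> finite V \<and>
     (\<forall>a b. E a b \<noteq> None \<longrightarrow> a \<in> V \<and> b \<in> V \<and> a \<noteq> b)"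

definition induced_edges :: "('a \<Rightarrow> 'a \<Rightarrow> etype option) \<Rightarrow> 'a set \<Rightarrow> ('a \<Rightarrow> 'a \<Rightarrow> etype option)" where
  "induced_edges E A = (\<lambda>a b. if a \<in> A \<and> b \<in> A then E a b else None)"

text \<open>Vertex sets S of the solid/double-induced subdigraphs (induced subdigraphs closed
  under following solid and double edges).\<close>
definition arrow_closed :: "'a set \<Rightarrow> ('a \<Rightarrow> 'a \<Rightarrow> etype option) \<Rightarrow> 'a set \<Rightarrow> bool" where
  "arrow_closed V E S \<longleftrightarrow> S \<subseteq> V \<and>
     (\<forall>a \<in> S. \<forall>b. E a b = Some Solid \<or> E a b = Some Double \<longrightarrow> b \<in> S)"

definition proper_col :: "('a \<Rightarrow> 'a \<Rightarrow> etype option) \<Rightarrow> ('a \<Rightarrow> nat) \<Rightarrow> bool" where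
  "proper_col E \<kappa> \<longleftrightarrow> (\<forall>a b.
      (E a b = Some Dashed \<longrightarrow> \<kappa> a \<noteq> \<kappa> b) \<and>
      (E a b = Some Solid \<longrightarrow> \<kappa> a < \<kappa> b) \<and>
      (E a b = Some Double \<longrightarrow> \<kappa> a \<le> \<kappa> b))"

text \<open>Formal power series in commuting variables x_1, x_2, ... are represented by their
  coefficient functions on exponent vectors m :: nat \<Rightarrow> nat (m i = exponent of x_i).
  Only finitely supported m with m 0 = 0 are genuine monomials.\<close>
type_synonym pseries = "(nat \<Rightarrow> nat) \<Rightarrow> int"

definition is_monomial :: "(nat \<Rightarrow> nat) \<Rightarrow> bool" where
  "is_monomial m \<longleftrightarrow> finite {i. m i \<noteq> 0} \<and> m 0 = 0"

definition mdegree :: "(nat \<Rightarrow> nat) \<Rightarrow> nat" where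
  "mdegree m = (\<Sum>i\<in>{i. m i \<noteq> 0}. m i)"

text \<open>Generalized chromatic function: coefficient of the monomial m is the number of
  proper colourings \<kappa> : V \<rightarrow> {1,2,...} with |\<kappa>^{-1}(i)| = m i for all i.
  (Colourings are normalised to the value 0 outside V.)\<close>
definition chrom :: "'a set \<Rightarrow> ('a \<Rightarrow> 'a \<Rightarrow> etype option) \<Rightarrow> pseries" where
  "chrom V E m = int (card {\<kappa>. (\<forall>a\<in>V. 1 \<le> \<kappa> a) \<and> (\<forall>a. a \<notin> V \<longrightarrow> \<kappa> a = 0) \<and>
       proper_col E \<kappa> \<and> (\<forall>i. card {a\<in>V. \<kappa> a = i} = m i)})"

definition mono_of :: "nat list \<Rightarrow> nat list \<Rightarrow> (nat \<Rightarrow> nat)" where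
  "mono_of idx \<alpha> = (\<lambda>n. \<Sum>t<length \<alpha>. if idx ! t = n then \<alpha> ! t else 0)"

definition QSym :: "pseries set" where
  "QSym = {f. (\<exists>d. \<forall>m. f m \<noteq> 0 \<longrightarrow> is_monomial m \<and> mdegree m \<le> d) \<and>
     (\<forall>\<alpha> i j. length i = length \<alpha> \<and> length j = length \<alpha> \<and> (\<forall>t\<in>set \<alpha>. 0 < t) \<and>
        sorted_wrt (<) i \<and> sorted_wrt (<) j \<and> (\<forall>t\<in>set i. 1 \<le> t) \<and> (\<forall>t\<in>set j. 1 \<le> t)
        \<longrightarrow> f (mono_of i \<alpha>) = f (mono_of j \<alpha>))}"

definition exps :: "(nat \<Rightarrow> nat) \<Rightarrow> nat list" where
  "exps m = map m (sorted_list_of_set {i. m i \<noteq> 0})"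

text \<open>Coproduct of f \<in> QSym, as a series in two alphabets x, y (identifying
  QSym(x) \<otimes> QSym(y) with its image f1(x) g1(y)): its coefficient at
  x^mx y^my is the coefficient of f(x_1<x_2<...<y_1<y_2<...) there, i.e. the
  coefficient in f of x_1^{c_1}...x_k^{c_k}, where c is the composition formed by
  the exponents of mx followed by those of my.\<close>
definition coprod :: "pseries \<Rightarrow> (nat \<Rightarrow> nat) \<Rightarrow> (nat \<Rightarrow> nat) \<Rightarrow> int" where
  "coprod f mx my = (let c = exps mx @ exps my in f (mono_of [1..<length c + 1] c))"

end

theory Submission
  imports Defs
begin

definition Col :: "'a set \<Rightarrow> ('a \<Rightarrow> 'a \<Rightarrow> etype option) \<Rightarrow> (nat \<Rightarrow> nat) \<Rightarrow> ('a \<Rightarrow> nat) set" where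
  "Col V E m = {\<kappa>. (\<forall>a\<in>V. 1 \<le> \<kappa> a) \<and> (\<forall>a. a \<notin> V \<longrightarrow> \<kappa> a = 0) \<and>
       proper_col E \<kappa> \<and> (\<forall>i. card {a\<in>V. \<kappa> a = i} = m i)}"

lemma chrom_Col: "chrom V E m = int (card (Col V E m))"
  unfolding chrom_def Col_def by simp

lemma mono_of_nth:
  assumes "distinct idx" "length idx = length \<alpha>" "t < length idx"
  shows "mono_of idx \<alpha> (idx ! t) = \<alpha> ! t"
proof -
  have "mono_of idx \<alpha> (idx ! t) = (\<Sum>s<length \<alpha>. if s = t then \<alpha> ! s else 0)"
    unfolding mono_of_def using assms by (intro sum.cong) (auto simp: nth_eq_iff_index_eq)
  also have "\<dots> = \<alpha> ! t" using assms by (simp add: sum.delta)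
  finally show ?thesis .
qed

lemma mono_of_notin:
  assumes "x \<notin> set idx" "length idx = length \<alpha>"
  shows "mono_of idx \<alpha> x = 0"
  unfolding mono_of_def using assms by (intro sum.neutral) (auto)

lemma mono_of_upt:
  assumes "length \<alpha> = n"
  shows "mono_of [a..<a+n] \<alpha> x = (if a \<le> x \<and> x < a + n then \<alpha> ! (x - a) else 0)"
proof (cases "a \<le> x \<and> x < a + n")
  case True
  then have "x = [a..<a+n] ! (x - a)" by simp
  then have "mono_of [a..<a+n] \<alpha> x = mono_of [a..<a+n] \<alpha> ([a..<a+n] ! (x - a))" by simp
  also have "\<dots> = \<alpha> ! (x - a)" using True assms by (intro mono_of_nth) auto
  finally show ?thesis using True by simp
next
  case False
  then show ?thesis using assms by (auto intro!: mono_of_notin)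
qed

lemma strict_mono_on_le_iff:
  fixes \<psi> :: "nat \<Rightarrow> nat"
  assumes "strict_mono_on B \<psi>" "x \<in> B" "y \<in> B"
  shows "\<psi> x \<le> \<psi> y \<longleftrightarrow> x \<le> y"
  using strict_mono_on_less[OF assms(1) assms(3) assms(2)] by (simp add: not_less[symmetric])

lemma strict_mono_on_eq_iff:
  fixes \<psi> :: "nat \<Rightarrow> nat"
  assumes "strict_mono_on B \<psi>" "x \<in> B" "y \<in> B"
  shows "\<psi> x = \<psi> y \<longleftrightarrow> x = y"
  using strict_mono_on_le_iff[OF assms] strict_mono_on_le_iff[OF assms(1) assms(3) assms(2)] by auto

lemma proper_col_comp:
  fixes \<psi> :: "nat \<Rightarrow> nat"
  assumes "strict_mono_on B \<psi>" "range \<kappa> \<subseteq> B"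
  shows "proper_col E (\<psi> \<circ> \<kappa>) \<longleftrightarrow> proper_col E \<kappa>"
proof -
  have B: "\<And>a. \<kappa> a \<in> B" using assms(2) by auto
  show ?thesis unfolding proper_col_def
    using strict_mono_on_less[OF assms(1) B B] strict_mono_on_le_iff[OF assms(1) B B]
      strict_mono_on_eq_iff[OF assms(1) B B] by simp
qed


lemma Col_range:
  assumes "finite V" "\<kappa> \<in> Col V E m" "0 \<in> B" "\<forall>i. i \<notin> B \<longrightarrow> m i = 0"
  shows "range \<kappa> \<subseteq> B"
proof
  fix x assume "x \<in> range \<kappa>"
  then obtain a where x: "x = \<kappa> a" by auto
  show "x \<in> B"
  proof (cases "a \<in> V")
    case True
    have "{b\<in>V. \<kappa> b = x} \<noteq> {}" using True x by auto
    moreover have "finite {b\<in>V. \<kappa> b = x}" using assms(1) by auto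
    ultimately have "card {b\<in>V. \<kappa> b = x} \<noteq> 0" by auto
    then have "m x \<noteq> 0" using assms(2) unfolding Col_def by auto
    then show ?thesis using assms(4) by auto
  next
    case False
    then show ?thesis using assms(2,3) x unfolding Col_def by auto
  qed
qed

lemma Col_comp_iff:
  fixes \<psi> :: "nat \<Rightarrow> nat"
  assumes mono: "strict_mono_on B \<psi>" and B0: "0 \<in> B" and psi0: "\<psi> 0 = 0"
    and m': "\<forall>i. i \<notin> B \<longrightarrow> m' i = 0" and m: "\<forall>i. i \<notin> \<psi> ` B \<longrightarrow> m i = 0"
    and mm: "\<forall>t\<in>B. m (\<psi> t) = m' t" and rng: "range \<kappa> \<subseteq> B"
  shows "\<psi> \<circ> \<kappa> \<in> Col V E m \<longleftrightarrow> \<kappa> \<in> Col V E m'"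
proof -
  have Bk: "\<And>a. \<kappa> a \<in> B" using rng by auto
  have z: "\<And>a. \<psi> (\<kappa> a) = 0 \<longleftrightarrow> \<kappa> a = 0"
    using strict_mono_on_eq_iff[OF mono Bk B0] psi0 by simp
  have cnt1: "card {a\<in>V. \<psi> (\<kappa> a) = \<psi> t} = card {a\<in>V. \<kappa> a = t}" if "t \<in> B" for t
    using strict_mono_on_eq_iff[OF mono Bk that] by simp
  have cnt2: "{a\<in>V. \<psi> (\<kappa> a) = i} = {}" if "i \<notin> \<psi> ` B" for i
    using that Bk by auto
  have cnt3: "{a\<in>V. \<kappa> a = i} = {}" if "i \<notin> B" for i
    using that Bk by auto
  have P: "proper_col E (\<psi> \<circ> \<kappa>) \<longleftrightarrow> proper_col E \<kappa>" by (rule proper_col_comp[OF mono rng])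
  have C: "(\<forall>i. card {a\<in>V. \<psi> (\<kappa> a) = i} = m i) \<longleftrightarrow> (\<forall>i. card {a\<in>V. \<kappa> a = i} = m' i)"
  proof
    assume h: "\<forall>i. card {a\<in>V. \<psi> (\<kappa> a) = i} = m i"
    show "\<forall>i. card {a\<in>V. \<kappa> a = i} = m' i"
    proof
      fix i show "card {a\<in>V. \<kappa> a = i} = m' i"
      proof (cases "i \<in> B")
        case True then show ?thesis using h[rule_format, of "\<psi> i"] cnt1[OF True] mm by simp
      next
        case False then show ?thesis using m' by (subst cnt3[OF False]) simp
      qed
    qed
  next
    assume h: "\<forall>i. card {a\<in>V. \<kappa> a = i} = m' i"
    show "\<forall>i. card {a\<in>V. \<psi> (\<kappa> a) = i} = m i"
    proof
      fix i show "card {a\<in>V. \<psi> (\<kappa> a) = i} = m i"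
      proof (cases "i \<in> \<psi> ` B")
        case True then obtain t where t: "t \<in> B" "i = \<psi> t" by auto
        then show ?thesis using h cnt1[OF t(1)] mm by simp
      next
        case False then show ?thesis using m by (subst cnt2[OF False]) simp
      qed
    qed
  qed
  show ?thesis unfolding Col_def using P C z
    by (simp add: Suc_le_eq) (metis neq0_conv)
qed

lemma chrom_relabel:
  fixes \<psi> :: "nat \<Rightarrow> nat"
  assumes fin: "finite V" and mono: "strict_mono_on B \<psi>" and B0: "0 \<in> B" and psi0: "\<psi> 0 = 0"
    and m': "\<forall>i. i \<notin> B \<longrightarrow> m' i = 0" and m: "\<forall>i. i \<notin> \<psi> ` B \<longrightarrow> m i = 0"
    and mm: "\<forall>t\<in>B. m (\<psi> t) = m' t"
  shows "chrom V E m = chrom V E m'"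
proof -
  let ?f = "\<lambda>\<kappa>. \<psi> \<circ> \<kappa>" and ?g = "\<lambda>\<kappa>. the_inv_into B \<psi> \<circ> \<kappa>"
  have inj: "inj_on \<psi> B" using mono strict_mono_on_imp_inj_on by blast
  have pB: "0 \<in> \<psi> ` B" using B0 psi0 by force
  have m2: "\<forall>i. i \<notin> \<psi> ` B \<longrightarrow> m i = 0" using m by auto
  have "bij_betw ?f (Col V E m') (Col V E m)"
  proof (rule bij_betw_byWitness[where f'="?g"])
    show "\<forall>a\<in>Col V E m'. ?g (?f a) = a"
    proof
      fix \<kappa> assume k: "\<kappa> \<in> Col V E m'"
      have "range \<kappa> \<subseteq> B" by (rule Col_range[OF fin k B0 m'])
      then show "?g (?f \<kappa>) = \<kappa>" using the_inv_into_f_f[OF inj] by (auto simp: fun_eq_iff)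
    qed
    show "\<forall>a\<in>Col V E m. ?f (?g a) = a"
    proof
      fix \<kappa> assume k: "\<kappa> \<in> Col V E m"
      have "range \<kappa> \<subseteq> \<psi> ` B" by (rule Col_range[OF fin k pB m2])
      then show "?f (?g \<kappa>) = \<kappa>" using f_the_inv_into_f[OF inj] by (auto simp: fun_eq_iff)
    qed
    show "?f ` Col V E m' \<subseteq> Col V E m"
    proof
      fix x assume "x \<in> ?f ` Col V E m'"
      then obtain \<kappa> where k: "\<kappa> \<in> Col V E m'" "x = ?f \<kappa>" by auto
      have "range \<kappa> \<subseteq> B" by (rule Col_range[OF fin k(1) B0 m'])
      then show "x \<in> Col V E m" using Col_comp_iff[OF mono B0 psi0 m' m mm] k by auto
    qed
    show "?g ` Col V E m \<subseteq> Col V E m'"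
    proof
      fix x assume "x \<in> ?g ` Col V E m"
      then obtain \<kappa> where k: "\<kappa> \<in> Col V E m" "x = ?g \<kappa>" by auto
      have r: "range \<kappa> \<subseteq> \<psi> ` B" by (rule Col_range[OF fin k(1) pB m2])
      then have r2: "range x \<subseteq> B" using k(2) the_inv_into_into[OF inj] by auto
      have "?f x = \<kappa>" using r k(2) f_the_inv_into_f[OF inj] by (auto simp: fun_eq_iff)
      then show "x \<in> Col V E m'" using Col_comp_iff[OF mono B0 psi0 m' m mm r2] k by auto
    qed
  qed
  then show ?thesis unfolding chrom_Col using bij_betw_same_card by metis
qed


lemma chrom_shift:
  assumes fin: "finite V" and srt: "sorted_wrt (<) idx" and pos: "\<forall>t\<in>set idx. 1 \<le> t"
    and len: "length idx = length \<alpha>"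
  shows "chrom V E (mono_of idx \<alpha>) = chrom V E (mono_of [Suc p..<Suc p + length \<alpha>] \<alpha>)"
proof -
  let ?n = "length \<alpha>"
  define B where "B = insert 0 {Suc p..<Suc p + ?n}"
  define \<psi> where "\<psi> = (\<lambda>x. if x = 0 then 0 else idx ! (x - Suc p))"
  have dist: "distinct idx" using srt by (simp add: strict_sorted_iff)
  have inset: "idx ! k \<in> set idx" if "k < ?n" for k using that len by simp
  have mono: "strict_mono_on B \<psi>"
  proof (rule strict_mono_onI)
    fix x y assume xy: "x \<in> B" "y \<in> B" "x < y"
    show "\<psi> x < \<psi> y"
    proof (cases "x = 0")
      case True
      then have "y \<noteq> 0" "y - Suc p < ?n" using xy by (auto simp: B_def)
      then show ?thesis using True pos inset[of "y - Suc p"] by (force simp: \<psi>_def)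
    next
      case False
      then have "x - Suc p < y - Suc p" "y - Suc p < length idx" "x \<noteq> 0" "y \<noteq> 0"
        using xy len by (auto simp: B_def)
      then show ?thesis using sorted_wrt_nth_less[OF srt] by (simp add: \<psi>_def)
    qed
  qed
  have psiB: "\<psi> ` B = insert 0 (set idx)"
  proof
    show "\<psi> ` B \<subseteq> insert 0 (set idx)" using len by (auto simp: B_def \<psi>_def)
    show "insert 0 (set idx) \<subseteq> \<psi> ` B"
    proof
      fix x assume "x \<in> insert 0 (set idx)"
      then consider "x = 0" | k where "k < length idx" "x = idx ! k" by (auto simp: in_set_conv_nth)
      then show "x \<in> \<psi> ` B"
      proof cases
        case 1 then show ?thesis by (force simp: B_def \<psi>_def)
      next
        case 2
        then have "\<psi> (Suc p + k) = x" "Suc p + k \<in> B" using len by (auto simp: B_def \<psi>_def)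
        then show ?thesis by force
      qed
    qed
  qed
  show ?thesis
  proof (rule chrom_relabel[OF fin mono])
    show "0 \<in> B" by (simp add: B_def)
    show "\<psi> 0 = 0" by (simp add: \<psi>_def)
    show "\<forall>i. i \<notin> B \<longrightarrow> mono_of [Suc p..<Suc p + ?n] \<alpha> i = 0"
      unfolding mono_of_upt[OF refl] by (auto simp: B_def)
    show "\<forall>i. i \<notin> \<psi> ` B \<longrightarrow> mono_of idx \<alpha> i = 0"
      using len by (auto simp: psiB intro: mono_of_notin)
    show "\<forall>t\<in>B. mono_of idx \<alpha> (\<psi> t) = mono_of [Suc p..<Suc p + ?n] \<alpha> t"
    proof
      fix t assume t: "t \<in> B"
      show "mono_of idx \<alpha> (\<psi> t) = mono_of [Suc p..<Suc p + ?n] \<alpha> t"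
      proof (cases "t = 0")
        case True
        have "0 \<notin> set idx" using pos by auto
        then show ?thesis using True len unfolding mono_of_upt[OF refl] by (simp add: \<psi>_def mono_of_notin)
      next
        case False
        then have "t - Suc p < length idx" "Suc p \<le> t" "t < Suc p + ?n" using t len by (auto simp: B_def)
        then show ?thesis using False mono_of_nth[OF dist len] unfolding mono_of_upt[OF refl] by (simp add: \<psi>_def)
      qed
    qed
  qed
qed


lemma Col_finite:
  assumes fin: "finite V"
  shows "finite (Col V E m)"
proof (cases "Col V E m = {}")
  case True then show ?thesis by simp
next
  case False
  then obtain \<kappa>0 where k0: "\<kappa>0 \<in> Col V E m" by auto
  define B where "B = insert 0 (\<kappa>0 ` V)"
  have mB: "\<forall>i. i \<notin> B \<longrightarrow> m i = 0"
  proof (intro allI impI)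
    fix i assume "i \<notin> B"
    then have e: "{a\<in>V. \<kappa>0 a = i} = {}" by (auto simp: B_def)
    have "m i = card {a\<in>V. \<kappa>0 a = i}" using k0 unfolding Col_def by auto
    then show "m i = 0" by (simp add: e)
  qed
  have "Col V E m \<subseteq> {f. \<forall>x. (x \<in> V \<longrightarrow> f x \<in> B) \<and> (x \<notin> V \<longrightarrow> f x = 0)}"
  proof
    fix \<kappa> assume k: "\<kappa> \<in> Col V E m"
    have "range \<kappa> \<subseteq> B" by (rule Col_range[OF fin k _ mB]) (simp add: B_def)
    then show "\<kappa> \<in> {f. \<forall>x. (x \<in> V \<longrightarrow> f x \<in> B) \<and> (x \<notin> V \<longrightarrow> f x = 0)}"
      using k unfolding Col_def by auto
  qed
  moreover have "finite B" using fin by (simp add: B_def)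
  ultimately show ?thesis
    using finite_set_of_finite_funs[OF fin, of B 0] finite_subset by blast
qed

lemma proper_col_restrict:
  assumes pc: "proper_col E \<kappa>"
  shows "proper_col (induced_edges E A) (\<lambda>a. if a \<in> A then \<kappa> a else 0)"
  unfolding proper_col_def
proof (intro allI)
  fix a b
  have h: "(E a b = Some Dashed \<longrightarrow> \<kappa> a \<noteq> \<kappa> b) \<and> (E a b = Some Solid \<longrightarrow> \<kappa> a < \<kappa> b) \<and>
      (E a b = Some Double \<longrightarrow> \<kappa> a \<le> \<kappa> b)" using pc unfolding proper_col_def by blast
  show "(induced_edges E A a b = Some Dashed \<longrightarrow> (if a \<in> A then \<kappa> a else 0) \<noteq> (if b \<in> A then \<kappa> b else 0)) \<and>
        (induced_edges E A a b = Some Solid \<longrightarrow> (if a \<in> A then \<kappa> a else 0) < (if b \<in> A then \<kappa> b else 0)) \<and>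
        (induced_edges E A a b = Some Double \<longrightarrow> (if a \<in> A then \<kappa> a else 0) \<le> (if b \<in> A then \<kappa> b else 0))"
  proof (cases "a \<in> A \<and> b \<in> A")
    case True then show ?thesis using h by (simp add: induced_edges_def)
  next
    case False then show ?thesis by (auto simp add: induced_edges_def)
  qed
qed

lemma split_fwd:
  assumes k: "\<kappa> \<in> Col V E M" and kS: "\<And>a. a \<in> S \<longleftrightarrow> a \<in> V \<and> P < \<kappa> a"
    and M1: "\<forall>i. i \<le> P \<longrightarrow> M i = M1 i" and M2: "\<forall>i. P < i \<longrightarrow> M i = M2 i"
    and z1: "\<forall>i. P < i \<longrightarrow> M1 i = 0" and z2: "\<forall>i. i \<le> P \<longrightarrow> M2 i = 0"
  shows "(\<lambda>a. if a \<in> V - S then \<kappa> a else 0) \<in> Col (V - S) (induced_edges E (V - S)) M1"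
    and "(\<lambda>a. if a \<in> S then \<kappa> a else 0) \<in> Col S (induced_edges E S) M2"
proof -
  have pc: "proper_col E \<kappa>" and cnt: "\<And>i. card {a\<in>V. \<kappa> a = i} = M i"
    and pos: "\<forall>a\<in>V. 1 \<le> \<kappa> a"
    using k unfolding Col_def by auto
  have c1: "card {a\<in>V - S. (if a \<in> V - S then \<kappa> a else 0) = i} = M1 i" for i
  proof (cases "i \<le> P")
    case True
    have e: "{a\<in>V - S. (if a \<in> V - S then \<kappa> a else 0) = i} = {a\<in>V. \<kappa> a = i}"
    proof (rule set_eqI)
      fix x show "x \<in> {a\<in>V - S. (if a \<in> V - S then \<kappa> a else 0) = i} \<longleftrightarrow> x \<in> {a\<in>V. \<kappa> a = i}"
        using kS[of x] True by auto
    qed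
    show ?thesis unfolding e using cnt[of i] M1 True by simp
  next
    case False
    have e: "{a\<in>V - S. (if a \<in> V - S then \<kappa> a else 0) = i} = {}"
    proof (rule set_eqI)
      fix x show "x \<in> {a\<in>V - S. (if a \<in> V - S then \<kappa> a else 0) = i} \<longleftrightarrow> x \<in> {}"
        using kS[of x] False by auto
    qed
    show ?thesis unfolding e using z1 False by simp
  qed
  have c2: "card {a\<in>S. (if a \<in> S then \<kappa> a else 0) = i} = M2 i" for i
  proof (cases "i \<le> P")
    case True
    have e: "{a\<in>S. (if a \<in> S then \<kappa> a else 0) = i} = {}"
    proof (rule set_eqI)
      fix x show "x \<in> {a\<in>S. (if a \<in> S then \<kappa> a else 0) = i} \<longleftrightarrow> x \<in> {}"
        using kS[of x] True by auto
    qed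
    show ?thesis unfolding e using z2 True by simp
  next
    case False
    have e: "{a\<in>S. (if a \<in> S then \<kappa> a else 0) = i} = {a\<in>V. \<kappa> a = i}"
    proof (rule set_eqI)
      fix x show "x \<in> {a\<in>S. (if a \<in> S then \<kappa> a else 0) = i} \<longleftrightarrow> x \<in> {a\<in>V. \<kappa> a = i}"
        using kS[of x] False by auto
    qed
    show ?thesis unfolding e using cnt[of i] M2 False by simp
  qed
  have p1: "proper_col (induced_edges E (V - S)) (\<lambda>a. if a \<in> V - S then \<kappa> a else 0)"
    by (rule proper_col_restrict[OF pc])
  have p2: "proper_col (induced_edges E S) (\<lambda>a. if a \<in> S then \<kappa> a else 0)"
    by (rule proper_col_restrict[OF pc])
  show "(\<lambda>a. if a \<in> V - S then \<kappa> a else 0) \<in> Col (V - S) (induced_edges E (V - S)) M1"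
    unfolding Col_def mem_Collect_eq using c1 p1 pos by (intro conjI allI ballI impI) auto
  show "(\<lambda>a. if a \<in> S then \<kappa> a else 0) \<in> Col S (induced_edges E S) M2"
    unfolding Col_def mem_Collect_eq using c2 p2 pos kS by (intro conjI allI ballI impI) auto
qed


lemma split_bwd:
  assumes fin: "finite V" and edges: "\<forall>a b. E a b \<noteq> None \<longrightarrow> a \<in> V \<and> b \<in> V"
    and ac: "arrow_closed V E S"
    and k1: "\<kappa>1 \<in> Col (V - S) (induced_edges E (V - S)) M1"
    and k2: "\<kappa>2 \<in> Col S (induced_edges E S) M2"
    and M1: "\<forall>i. i \<le> P \<longrightarrow> M i = M1 i" and M2: "\<forall>i. P < i \<longrightarrow> M i = M2 i"
    and z1: "\<forall>i. P < i \<longrightarrow> M1 i = 0" and z2: "\<forall>i. i \<le> P \<longrightarrow> M2 i = 0"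
  defines "x \<equiv> (\<lambda>a. \<kappa>1 a + \<kappa>2 a)"
  shows "x \<in> Col V E M" and "{a\<in>V. P < x a} = S"
proof -
  have SV: "S \<subseteq> V" using ac by (simp add: arrow_closed_def)
  have finS: "finite S" using fin SV by (rule finite_subset[rotated])
  have r1: "range \<kappa>1 \<subseteq> {..P}"
    by (rule Col_range[OF _ k1]) (use fin z1 in auto)
  have r2: "range \<kappa>2 \<subseteq> insert 0 {P<..}"
    by (rule Col_range[OF finS k2]) (use z2 in auto)
  have pos1: "\<forall>a\<in>V - S. 1 \<le> \<kappa>1 a" and out1: "\<forall>a. a \<notin> V - S \<longrightarrow> \<kappa>1 a = 0"
    and pc1: "proper_col (induced_edges E (V - S)) \<kappa>1"
    and cnt1: "\<And>i. card {a\<in>V - S. \<kappa>1 a = i} = M1 i"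
    using k1 unfolding Col_def by auto
  have pos2: "\<forall>a\<in>S. 1 \<le> \<kappa>2 a" and out2: "\<forall>a. a \<notin> S \<longrightarrow> \<kappa>2 a = 0"
    and pc2: "proper_col (induced_edges E S) \<kappa>2"
    and cnt2: "\<And>i. card {a\<in>S. \<kappa>2 a = i} = M2 i"
    using k2 unfolding Col_def by auto
  have xa1: "x a = \<kappa>1 a \<and> \<kappa>1 a \<le> P \<and> 1 \<le> \<kappa>1 a" if "a \<in> V - S" for a
  proof -
    have "\<kappa>2 a = 0" using out2 that by auto
    moreover have "\<kappa>1 a \<le> P" using r1 by auto
    ultimately show ?thesis using pos1 that by (simp add: x_def)
  qed
  have xa2: "x a = \<kappa>2 a \<and> P < \<kappa>2 a" if "a \<in> S" for a
  proof -
    have "\<kappa>1 a = 0" using out1 that by auto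
    moreover have "\<kappa>2 a \<in> insert 0 {P<..}" using r2 by auto
    moreover have "1 \<le> \<kappa>2 a" using pos2 that by auto
    ultimately show ?thesis by (auto simp add: x_def)
  qed
  have xa3: "x a = 0" if "a \<notin> V" for a
    using out1 out2 SV that by (auto simp: x_def)
  show FS: "{a\<in>V. P < x a} = S"
  proof (rule set_eqI)
    fix a show "a \<in> {a\<in>V. P < x a} \<longleftrightarrow> a \<in> S"
      using xa1[of a] xa2[of a] SV by (cases "a \<in> S") auto
  qed
  have pos: "\<forall>a\<in>V. 1 \<le> x a"
  proof
    fix a assume "a \<in> V"
    then show "1 \<le> x a" using xa1[of a] xa2[of a] by (cases "a \<in> S") auto
  qed
  have cnt: "card {a\<in>V. x a = i} = M i" for i
  proof (cases "i \<le> P")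
    case True
    have e: "{a\<in>V. x a = i} = {a\<in>V - S. \<kappa>1 a = i}"
    proof (rule set_eqI)
      fix a show "a \<in> {a\<in>V. x a = i} \<longleftrightarrow> a \<in> {a\<in>V - S. \<kappa>1 a = i}"
        using xa1[of a] xa2[of a] True by (cases "a \<in> S") auto
    qed
    show ?thesis unfolding e using cnt1[of i] M1 True by simp
  next
    case False
    have e: "{a\<in>V. x a = i} = {a\<in>S. \<kappa>2 a = i}"
    proof (rule set_eqI)
      fix a show "a \<in> {a\<in>V. x a = i} \<longleftrightarrow> a \<in> {a\<in>S. \<kappa>2 a = i}"
        using xa1[of a] xa2[of a] False SV by (cases "a \<in> S") auto
    qed
    show ?thesis unfolding e using cnt2[of i] M2 False by simp
  qed
  have pc: "proper_col E x"
    unfolding proper_col_def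
  proof (intro allI)
    fix a b
    show "(E a b = Some Dashed \<longrightarrow> x a \<noteq> x b) \<and> (E a b = Some Solid \<longrightarrow> x a < x b) \<and>
          (E a b = Some Double \<longrightarrow> x a \<le> x b)"
    proof (cases "E a b")
      case None then show ?thesis by simp
    next
      case (Some t)
      then have ab: "a \<in> V" "b \<in> V" using edges by auto
      consider "a \<in> V - S" "b \<in> V - S" | "a \<in> V - S" "b \<in> S" | "a \<in> S" "b \<in> V - S" | "a \<in> S" "b \<in> S"
        using ab by blast
      then show ?thesis
      proof cases
        case 1
        then have "induced_edges E (V - S) a b = E a b" by (simp add: induced_edges_def)
        moreover have "(induced_edges E (V - S) a b = Some Dashed \<longrightarrow> \<kappa>1 a \<noteq> \<kappa>1 b) \<and>
           (induced_edges E (V - S) a b = Some Solid \<longrightarrow> \<kappa>1 a < \<kappa>1 b) \<and>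
           (induced_edges E (V - S) a b = Some Double \<longrightarrow> \<kappa>1 a \<le> \<kappa>1 b)"
          using pc1 unfolding proper_col_def by blast
        ultimately show ?thesis using xa1[OF 1(1)] xa1[OF 1(2)] by simp
      next
        case 2
        then show ?thesis using xa1[OF 2(1)] xa2[OF 2(2)] by auto
      next
        case 3
        have "E a b \<noteq> Some Solid \<and> E a b \<noteq> Some Double" using ac 3 unfolding arrow_closed_def by blast
        then show ?thesis using xa2[OF 3(1)] xa1[OF 3(2)] by auto
      next
        case 4
        then have "induced_edges E S a b = E a b" by (simp add: induced_edges_def)
        moreover have "(induced_edges E S a b = Some Dashed \<longrightarrow> \<kappa>2 a \<noteq> \<kappa>2 b) \<and>
           (induced_edges E S a b = Some Solid \<longrightarrow> \<kappa>2 a < \<kappa>2 b) \<and>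
           (induced_edges E S a b = Some Double \<longrightarrow> \<kappa>2 a \<le> \<kappa>2 b)"
          using pc2 unfolding proper_col_def by blast
        ultimately show ?thesis using xa2[OF 4(1)] xa2[OF 4(2)] by simp
      qed
    qed
  qed
  show "x \<in> Col V E M"
    unfolding Col_def mem_Collect_eq using pos cnt pc xa3 by blast
qed


lemma Col_split:
  assumes fin: "finite V" and edges: "\<forall>a b. E a b \<noteq> None \<longrightarrow> a \<in> V \<and> b \<in> V"
    and M1: "\<forall>i. i \<le> P \<longrightarrow> M i = M1 i" and M2: "\<forall>i. P < i \<longrightarrow> M i = M2 i"
    and z1: "\<forall>i. P < i \<longrightarrow> M1 i = 0" and z2: "\<forall>i. i \<le> P \<longrightarrow> M2 i = 0"
  shows "card (Col V E M) = (\<Sum>S\<in>{S. arrow_closed V E S}.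
     card (Col (V - S) (induced_edges E (V - S)) M1) * card (Col S (induced_edges E S) M2))"
proof -
  define F where "F = (\<lambda>\<kappa>::'a \<Rightarrow> nat. {a\<in>V. P < \<kappa> a})"
  have finAC: "finite {S. arrow_closed V E S}"
  proof (rule finite_subset[of _ "Pow V"])
    show "{S. arrow_closed V E S} \<subseteq> Pow V" by (auto simp: arrow_closed_def)
  qed (use fin in simp)
  have FAC: "F ` Col V E M \<subseteq> {S. arrow_closed V E S}"
  proof
    fix S assume "S \<in> F ` Col V E M"
    then obtain \<kappa> where k: "\<kappa> \<in> Col V E M" "S = F \<kappa>" by auto
    have pc: "proper_col E \<kappa>" using k unfolding Col_def by auto
    show "S \<in> {S. arrow_closed V E S}"
      unfolding arrow_closed_def mem_Collect_eq
    proof (intro conjI ballI allI impI)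
      show "S \<subseteq> V" using k by (auto simp: F_def)
      fix a b assume a: "a \<in> S" and e: "E a b = Some Solid \<or> E a b = Some Double"
      then have "b \<in> V" using edges by fastforce
      moreover have "\<kappa> a \<le> \<kappa> b" using e pc unfolding proper_col_def by fastforce
      ultimately show "b \<in> S" using a k by (auto simp: F_def)
    qed
  qed
  have "card (Col V E M) = (\<Sum>S\<in>{S. arrow_closed V E S}. card {\<kappa>\<in>Col V E M. F \<kappa> = S})"
    using sum.group[OF Col_finite[OF fin] finAC FAC, of "\<lambda>_. 1::nat"] by (simp only: card_eq_sum)
  also have "\<dots> = (\<Sum>S\<in>{S. arrow_closed V E S}.
     card (Col (V - S) (induced_edges E (V - S)) M1) * card (Col S (induced_edges E S) M2))"
  proof (rule sum.cong[OF refl])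
    fix S assume "S \<in> {S. arrow_closed V E S}"
    then have ac: "arrow_closed V E S" by simp
    then have SV: "S \<subseteq> V" by (simp add: arrow_closed_def)
    let ?C1 = "Col (V - S) (induced_edges E (V - S)) M1" and ?C2 = "Col S (induced_edges E S) M2"
    let ?f = "\<lambda>\<kappa>::'a\<Rightarrow>nat. (\<lambda>a. if a \<in> V - S then \<kappa> a else 0, \<lambda>a. if a \<in> S then \<kappa> a else 0)"
    let ?g = "\<lambda>(\<kappa>1::'a\<Rightarrow>nat, \<kappa>2::'a\<Rightarrow>nat). (\<lambda>a. \<kappa>1 a + \<kappa>2 a)"
    have "bij_betw ?f {\<kappa>\<in>Col V E M. F \<kappa> = S} (?C1 \<times> ?C2)"
    proof (rule bij_betw_byWitness[where f'="?g"])
      show "\<forall>\<kappa>\<in>{\<kappa>\<in>Col V E M. F \<kappa> = S}. ?g (?f \<kappa>) = \<kappa>"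
      proof
        fix \<kappa> assume "\<kappa> \<in> {\<kappa>\<in>Col V E M. F \<kappa> = S}"
        then have out: "\<forall>a. a \<notin> V \<longrightarrow> \<kappa> a = 0" unfolding Col_def by auto
        show "?g (?f \<kappa>) = \<kappa>"
        proof (rule ext)
          fix a show "?g (?f \<kappa>) a = \<kappa> a" using out SV by (cases "a \<in> V"; cases "a \<in> S") auto
        qed
      qed
      show "\<forall>k\<in>?C1 \<times> ?C2. ?f (?g k) = k"
      proof
        fix k assume "k \<in> ?C1 \<times> ?C2"
        then obtain \<kappa>1 \<kappa>2 where kk: "k = (\<kappa>1, \<kappa>2)" "\<kappa>1 \<in> ?C1" "\<kappa>2 \<in> ?C2" by auto
        have out1: "\<forall>a. a \<notin> V - S \<longrightarrow> \<kappa>1 a = 0" using kk(2) unfolding Col_def by auto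
        have out2: "\<forall>a. a \<notin> S \<longrightarrow> \<kappa>2 a = 0" using kk(3) unfolding Col_def by auto
        have "(\<lambda>a. if a \<in> V - S then \<kappa>1 a + \<kappa>2 a else 0) = \<kappa>1"
        proof (rule ext)
          fix a show "(if a \<in> V - S then \<kappa>1 a + \<kappa>2 a else 0) = \<kappa>1 a" using out1 out2 by auto
        qed
        moreover have "(\<lambda>a. if a \<in> S then \<kappa>1 a + \<kappa>2 a else 0) = \<kappa>2"
        proof (rule ext)
          fix a show "(if a \<in> S then \<kappa>1 a + \<kappa>2 a else 0) = \<kappa>2 a" using out1 out2 by auto
        qed
        ultimately show "?f (?g k) = k" by (simp only: kk(1) prod.case prod.inject)
      qed
      show "?f ` {\<kappa>\<in>Col V E M. F \<kappa> = S} \<subseteq> ?C1 \<times> ?C2"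
      proof
        fix y assume "y \<in> ?f ` {\<kappa>\<in>Col V E M. F \<kappa> = S}"
        then obtain \<kappa> where k: "\<kappa> \<in> Col V E M" "F \<kappa> = S" and y: "y = ?f \<kappa>" by auto
        have kS: "a \<in> S \<longleftrightarrow> a \<in> V \<and> P < \<kappa> a" for a using k(2) by (auto simp: F_def)
        show "y \<in> ?C1 \<times> ?C2" unfolding y
          using split_fwd[OF k(1) kS M1 M2 z1 z2] by simp
      qed
      show "?g ` (?C1 \<times> ?C2) \<subseteq> {\<kappa>\<in>Col V E M. F \<kappa> = S}"
      proof
        fix y assume "y \<in> ?g ` (?C1 \<times> ?C2)"
        then obtain \<kappa>1 \<kappa>2 where k1: "\<kappa>1 \<in> ?C1" and k2: "\<kappa>2 \<in> ?C2"
          and y: "y = (\<lambda>a. \<kappa>1 a + \<kappa>2 a)" by auto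
        show "y \<in> {\<kappa>\<in>Col V E M. F \<kappa> = S}"
          using split_bwd[OF fin edges ac k1 k2 M1 M2 z1 z2] unfolding y F_def by simp
      qed
    qed
    then show "card {\<kappa>\<in>Col V E M. F \<kappa> = S} = card ?C1 * card ?C2"
      by (simp add: bij_betw_same_card card_cartesian_product)
  qed
  finally show ?thesis .
qed


lemma Col_monomial:
  assumes fin: "finite V" and k: "\<kappa> \<in> Col V E m"
  shows "is_monomial m \<and> mdegree m = card V"
proof -
  have cnt: "\<And>i. m i = card {a\<in>V. \<kappa> a = i}" and pos: "\<forall>a\<in>V. 1 \<le> \<kappa> a"
    using k unfolding Col_def by auto
  have supp: "{i. m i \<noteq> 0} = \<kappa> ` V"
  proof (rule set_eqI)
    fix i
    have "m i \<noteq> 0 \<longleftrightarrow> {a\<in>V. \<kappa> a = i} \<noteq> {}" unfolding cnt using fin by simp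
    then show "i \<in> {i. m i \<noteq> 0} \<longleftrightarrow> i \<in> \<kappa> ` V" by auto
  qed
  have m0: "m 0 = 0"
  proof -
    have e: "{a\<in>V. \<kappa> a = 0} = {}" using pos by force
    show ?thesis unfolding cnt e by simp
  qed
  have "mdegree m = (\<Sum>i\<in>\<kappa> ` V. card {a\<in>V. \<kappa> a = i})"
    unfolding mdegree_def supp using cnt by simp
  also have "\<dots> = card V"
    using sum.group[OF fin finite_imageI[OF fin] subset_refl, where g=\<kappa> and h="\<lambda>_. 1::nat"]
    by (simp only: card_eq_sum)
  finally show ?thesis using supp fin m0 unfolding is_monomial_def by simp
qed

lemma mono_of_exps:
  assumes "is_monomial m"
  shows "mono_of (sorted_list_of_set {i. m i \<noteq> 0}) (exps m) = m"
proof (rule ext)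
  fix x
  let ?e = "sorted_list_of_set {i. m i \<noteq> 0}"
  have fin: "finite {i. m i \<noteq> 0}" using assms by (simp add: is_monomial_def)
  have len: "length ?e = length (exps m)" by (simp add: exps_def)
  have dist: "distinct ?e" by simp
  show "mono_of ?e (exps m) x = m x"
  proof (cases "x \<in> set ?e")
    case True
    then obtain t where t: "t < length ?e" "x = ?e ! t" by (auto simp: in_set_conv_nth)
    then show ?thesis using mono_of_nth[OF dist len t(1)] by (simp add: exps_def)
  next
    case False
    then have "m x = 0" using fin by simp
    then show ?thesis using mono_of_notin[OF False len] by simp
  qed
qed

lemma chrom_exps:
  assumes fin: "finite V" and mono: "is_monomial m"
  shows "chrom V E m = chrom V E (mono_of [Suc p..<Suc p + length (exps m)] (exps m))"
proof -
  let ?e = "sorted_list_of_set {i. m i \<noteq> 0}"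
  have "chrom V E m = chrom V E (mono_of ?e (exps m))" using mono_of_exps[OF mono] by simp
  also have "\<dots> = chrom V E (mono_of [Suc p..<Suc p + length (exps m)] (exps m))"
  proof (rule chrom_shift[OF fin])
    show "sorted_wrt (<) ?e" by simp
    have "m 0 = 0" using mono by (simp add: is_monomial_def)
    moreover have "finite {i. m i \<noteq> 0}" using mono by (simp add: is_monomial_def)
    ultimately show "\<forall>t\<in>set ?e. 1 \<le> t" by (auto simp: Suc_le_eq intro!: gr0I)
    show "length ?e = length (exps m)" by (simp add: exps_def)
  qed
  finally show ?thesis .
qed


theorem mainTheorem2:
  fixes V :: "'a set" and E :: "'a \<Rightarrow> 'a \<Rightarrow> etype option"
  assumes "ec_digraph V E"
  shows "chrom V E \<in> QSym \<and>
    (\<forall>mx my. is_monomial mx \<and> is_monomial my \<longrightarrow>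
       coprod (chrom V E) mx my =
       (\<Sum>S\<in>{S. arrow_closed V E S}.
          chrom (V - S) (induced_edges E (V - S)) mx * chrom S (induced_edges E S) my))"
proof (intro conjI allI impI)
  have fin: "finite V" and edges: "\<forall>a b. E a b \<noteq> None \<longrightarrow> a \<in> V \<and> b \<in> V"
    using assms unfolding ec_digraph_def by auto
  show "chrom V E \<in> QSym"
    unfolding QSym_def mem_Collect_eq
  proof (intro conjI allI impI)
    show "\<exists>d. \<forall>m. chrom V E m \<noteq> 0 \<longrightarrow> is_monomial m \<and> mdegree m \<le> d"
    proof (intro exI allI impI)
      fix m assume "chrom V E m \<noteq> 0"
      then have "Col V E m \<noteq> {}" unfolding chrom_Col by auto
      then obtain \<kappa> where "\<kappa> \<in> Col V E m" by auto
      from Col_monomial[OF fin this] show "is_monomial m \<and> mdegree m \<le> card V" by simp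
    qed
    fix \<alpha> i j :: "nat list"
    assume h: "length i = length \<alpha> \<and> length j = length \<alpha> \<and> (\<forall>t\<in>set \<alpha>. 0 < t) \<and>
        sorted_wrt (<) i \<and> sorted_wrt (<) j \<and> (\<forall>t\<in>set i. 1 \<le> t) \<and> (\<forall>t\<in>set j. 1 \<le> t)"
    have "chrom V E (mono_of i \<alpha>) = chrom V E (mono_of [Suc 0..<Suc 0 + length \<alpha>] \<alpha>)"
      using h by (intro chrom_shift[OF fin]) auto
    also have "\<dots> = chrom V E (mono_of j \<alpha>)"
      using h by (intro chrom_shift[OF fin, symmetric]) auto
    finally show "chrom V E (mono_of i \<alpha>) = chrom V E (mono_of j \<alpha>)" .
  qed
  fix mx my :: "nat \<Rightarrow> nat"
  assume mm: "is_monomial mx \<and> is_monomial my"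
  define ex where "ex = exps mx"
  define ey where "ey = exps my"
  define p where "p = length ex"
  define q where "q = length ey"
  define M where "M = mono_of [Suc 0..<Suc 0 + length (ex @ ey)] (ex @ ey)"
  define M1 where "M1 = mono_of [Suc 0..<Suc 0 + length ex] ex"
  define M2 where "M2 = mono_of [Suc p..<Suc p + length ey] ey"
  have Mv: "M i = (if Suc 0 \<le> i \<and> i < Suc 0 + (p + q) then (ex @ ey) ! (i - Suc 0) else 0)" for i
    unfolding M_def mono_of_upt[OF refl] by (simp add: p_def q_def)
  have M1v: "M1 i = (if Suc 0 \<le> i \<and> i < Suc 0 + p then ex ! (i - Suc 0) else 0)" for i
    unfolding M1_def mono_of_upt[OF refl] by (simp add: p_def)
  have M2v: "M2 i = (if Suc p \<le> i \<and> i < Suc p + q then ey ! (i - Suc p) else 0)" for i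
    unfolding M2_def mono_of_upt[OF refl] by (simp add: q_def)
  have c1: "\<forall>i. i \<le> p \<longrightarrow> M i = M1 i"
  proof (intro allI impI)
    fix i assume "i \<le> p"
    then show "M i = M1 i" unfolding Mv M1v by (auto simp: nth_append p_def)
  qed
  have c2: "\<forall>i. p < i \<longrightarrow> M i = M2 i"
  proof (intro allI impI)
    fix i assume "p < i"
    then show "M i = M2 i" unfolding Mv M2v by (auto simp: nth_append p_def)
  qed
  have z1: "\<forall>i. p < i \<longrightarrow> M1 i = 0" unfolding M1v by auto
  have z2: "\<forall>i. i \<le> p \<longrightarrow> M2 i = 0" unfolding M2v by auto
  have "coprod (chrom V E) mx my = chrom V E M"
    unfolding coprod_def M_def Let_def ex_def ey_def by simp
  also have "\<dots> = int (\<Sum>S\<in>{S. arrow_closed V E S}.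
     card (Col (V - S) (induced_edges E (V - S)) M1) * card (Col S (induced_edges E S) M2))"
    unfolding chrom_Col using Col_split[OF fin edges c1 c2 z1 z2] by simp
  also have "\<dots> = (\<Sum>S\<in>{S. arrow_closed V E S}.
          chrom (V - S) (induced_edges E (V - S)) mx * chrom S (induced_edges E S) my)"
    unfolding of_nat_sum
  proof (rule sum.cong[OF refl])
    fix S assume "S \<in> {S. arrow_closed V E S}"
    then have SV: "S \<subseteq> V" by (simp add: arrow_closed_def)
    have f1: "finite (V - S)" using fin by simp
    have f2: "finite S" using fin SV by (rule finite_subset[rotated])
    have "chrom (V - S) (induced_edges E (V - S)) mx = chrom (V - S) (induced_edges E (V - S)) M1"
      unfolding M1_def ex_def using chrom_exps[OF f1, of mx _ 0] mm by simp
    moreover have "chrom S (induced_edges E S) my = chrom S (induced_edges E S) M2"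
      unfolding M2_def ey_def using chrom_exps[OF f2, of my _ p] mm by simp
    ultimately show "int (card (Col (V - S) (induced_edges E (V - S)) M1) * card (Col S (induced_edges E S) M2)) =
       chrom (V - S) (induced_edges E (V - S)) mx * chrom S (induced_edges E S) my"
      unfolding chrom_Col by simp
  qed
  finally show "coprod (chrom V E) mx my = (\<Sum>S\<in>{S. arrow_closed V E S}.
          chrom (V - S) (induced_edges E (V - S)) mx * chrom S (induced_edges E S) my)" .
qed

end
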